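(* Let $\alpha>0$ and let $f:[0,\infty)\to[0,\infty)$ be $(-1/\alpha)$-concave and integrable. Define $H_f:[0,\alpha)\to\mathbb{R}_+$ by \[ H_f(p)=\frac{1}{B(p,\alpha-p)}\int_0^{+\infty}t^{p-1}f(t)\,dt \quad (0<p<\alpha),\qquad H_f(0)=f(0), \] where $B(p,\alpha-p)=\int_0^1u^{p-1}(1-u)^{\alpha-p-1}du=\int_0^{+\infty}t^{p-1}(t+1)^{-\alpha}dt$. Then $H_f$ is log-concave on $[0,\alpha)$.
   Context: For $\alpha>0$, a function $f\ge 0$ defined on a convex set is $(-1/\alpha)$-concave if for all $x,y$ with $f(x)f(y)>0$ and all $\lambda\in[0,1]$, $f((1-\lambda)x+\lambda y)\ge\big((1-\lambda)f(x)^{-1/\alpha}+\lambda f(y)^{-1/\alpha}\big)^{-\alpha}$; equivalently $f=\varphi^{-\alpha}$ for some convex $\varphi$ with values in $(0,+\infty]$. *)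

theory Defs
  imports "HOL-Analysis.Analysis"
begin

definition neg_inv_concave_on :: "real \<Rightarrow> real set \<Rightarrow> (real \<Rightarrow> real) \<Rightarrow> bool" where
  "neg_inv_concave_on \<alpha> S f \<longleftrightarrow>
     (\<forall>x\<in>S. f x \<ge> 0) \<and>
     (\<forall>x\<in>S. \<forall>y\<in>S. f x * f y > 0 \<longrightarrow> (\<forall>l\<in>{0..1}.
        f ((1 - l) * x + l * y) \<ge>
          ((1 - l) * f x powr (-1/\<alpha>) + l * f y powr (-1/\<alpha>)) powr (-\<alpha>)))"

definition log_concave_on :: "real set \<Rightarrow> (real \<Rightarrow> real) \<Rightarrow> bool" where
  "log_concave_on S g \<longleftrightarrow>
     (\<forall>x\<in>S. g x \<ge> 0) \<and>
     (\<forall>x\<in>S. \<forall>y\<in>S. \<forall>l\<in>{0<..<1}.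
        g ((1 - l) * x + l * y) \<ge> g x powr (1 - l) * g y powr l)"

definition H_fun :: "real \<Rightarrow> (real \<Rightarrow> real) \<Rightarrow> real \<Rightarrow> real" where
  "H_fun \<alpha> f p = (if p = 0 then f 0
      else integral {0<..} (\<lambda>t. t powr (p - 1) * f t) / Beta p (\<alpha> - p))"

end

theory Submission
  imports Defs
begin


lemma beta_model:
  fixes q \<alpha> s :: real
  assumes q: "0 < q" "q < \<alpha>" and s: "s > 0"
  shows "((\<lambda>t. t powr (q-1) * (1 + t/s) powr (-\<alpha>)) has_integral (s powr q * Beta q (\<alpha> - q))) {0<..}"
proof -
  define F where "F = (\<lambda>t::real. t powr (q-1) * (1 + t/s) powr (-\<alpha>))"
  define g where "g = (\<lambda>u::real. s * u / (1 - u))"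
  define g' where "g' = (\<lambda>u::real. s / (1 - u)^2)"
  have eq: "F (g u) * g' u = s powr q * (u powr (q - 1) * (1 - u) powr (\<alpha> - q - 1))"
    if "0 < u" "u < 1" for u
  proof -
    have "1 + g u / s = 1 / (1 - u)" using that s by (simp add: g_def field_simps)
    hence A: "(1 + g u / s) powr (-\<alpha>) = (1 - u) powr \<alpha>"
      using that by (simp add: powr_divide powr_minus_divide)
    have B: "g u powr (q - 1) = s powr (q-1) * u powr (q-1) * (1 - u) powr (1 - q)"
    proof -
      have "g u powr (q - 1) = (s * u) powr (q-1) / (1 - u) powr (q - 1)"
        unfolding g_def using that s by (simp add: powr_divide)
      also have "(s * u) powr (q-1) = s powr (q-1) * u powr (q-1)"
        using that s by (simp add: powr_mult)
      also have "(1 - u) powr (1 - q) = 1 / (1 - u) powr (q - 1)"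
        by (metis minus_diff_eq powr_minus_divide)
      ultimately show ?thesis by simp
    qed
    have C: "g' u = s * (1 - u) powr (-2)"
    proof -
      have "(1 - u) powr (-2) = inverse ((1-u) powr 2)" using that by (simp add: powr_minus)
      also have "(1-u) powr 2 = (1-u)^2" using that by (simp add: powr_numeral)
      finally show ?thesis by (simp add: g'_def divide_inverse)
    qed
    have "F (g u) * g' u = s powr (q-1) * s * u powr (q-1) * ((1 - u) powr (1 - q) * (1 - u) powr \<alpha> * (1 - u) powr (-2))"
      unfolding F_def A B C by (simp add: mult_ac)
    also have "(1 - u) powr (1 - q) * (1 - u) powr \<alpha> * (1 - u) powr (-2) = (1 - u) powr (\<alpha> - q - 1)"
      using that by (simp add: powr_add[symmetric])
    also have "s powr (q-1) * s = s powr q" using s by (simp add: powr_diff)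
    finally show ?thesis by (simp add: mult_ac)
  qed
  have E01: "einterval 0 1 = {0<..<(1::real)}"
    by (auto simp: einterval_def zero_ereal_def one_ereal_def)
  have intB: "set_integrable lborel (einterval 0 1) (\<lambda>u. F (g u) * g' u)"
  proof -
    have "set_integrable lborel {0..1} (\<lambda>u. s powr q * (u powr (q - 1) * (1 - u) powr (\<alpha> - q - 1)))"
      using set_integrable_mult_right[OF integrable_Beta[of q "\<alpha> - q"], of "s powr q"] q
      by simp
    hence "set_integrable lborel {0<..<1} (\<lambda>u. s powr q * (u powr (q - 1) * (1 - u) powr (\<alpha> - q - 1)))"
      by (rule set_integrable_subset) auto
    hence "set_integrable lborel {0<..<1} (\<lambda>u. F (g u) * g' u)"
      by (rule set_integrable_cong[THEN iffD1, rotated -1]) (auto simp: eq)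
    moreover have "einterval 0 1 = {0<..<(1::real)}"
      by (auto simp: einterval_def zero_ereal_def one_ereal_def)
    ultimately show ?thesis by simp
  qed
  have sub: "set_integrable lborel (einterval 0 \<infinity>) F \<and>
     (LBINT x=0..\<infinity>. F x) = (LBINT x=0..1. F (g x) * g' x)"
  proof (intro conjI)
    note X = interval_integral_substitution_nonneg[of 0 1 g g' F "0" "\<infinity>"]
    have a1: "\<And>x. 0 < ereal x \<Longrightarrow> ereal x < 1 \<Longrightarrow> DERIV g x :> g' x"
      unfolding g_def g'_def
      by (auto intro!: derivative_eq_intros simp: power2_eq_square field_simps zero_ereal_def one_ereal_def)
    have a2: "\<And>x. 0 < ereal x \<Longrightarrow> ereal x < 1 \<Longrightarrow> isCont F (g x)"
      unfolding F_def g_def using s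
      by (auto intro!: continuous_intros simp: zero_ereal_def one_ereal_def field_simps add_pos_pos)
    have a3: "\<And>x. 0 < ereal x \<Longrightarrow> ereal x < 1 \<Longrightarrow> isCont g' x"
      unfolding g'_def
      by (auto intro!: continuous_intros simp: zero_ereal_def one_ereal_def)
    have a4: "\<And>x. 0 < ereal x \<Longrightarrow> ereal x < 1 \<Longrightarrow> 0 \<le> F (g x)"
      unfolding F_def by simp
    have a5: "\<And>x. 0 \<le> ereal x \<Longrightarrow> ereal x \<le> 1 \<Longrightarrow> 0 \<le> g' x"
      unfolding g'_def using s by simp
    have a6: "((ereal \<circ> g \<circ> real_of_ereal) \<longlongrightarrow> 0) (at_right 0)"
      unfolding zero_ereal_def ereal_tendsto_simps g_def
      by (auto intro!: tendsto_eq_intros)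
    have lim: "filterlim (\<lambda>x. s * x * inverse (1 - x)) at_top (at_left (1::real))"
      apply (rule filterlim_tendsto_pos_mult_at_top[where c=s])
        apply (auto intro!: tendsto_eq_intros filterlim_inverse_at_top simp: s)
      by (simp add: eventually_at_filter)
    have a7: "((ereal \<circ> g \<circ> real_of_ereal) \<longlongrightarrow> \<infinity>) (at_left 1)"
      unfolding one_ereal_def ereal_tendsto_simps g_def using lim
      by (simp add: divide_inverse)
    show "set_integrable lborel (einterval 0 \<infinity>) F" 
      using X(1)[OF _ a1 a2 a3 a4 a5 a6 a7] intB by simp
    show "(LBINT x=0..\<infinity>. F x) = (LBINT x=0..1. F (g x) * g' x)" 
      using X(2)[OF _ a1 a2 a3 a4 a5 a6 a7] intB by simp
  qed
  have I1: "integral {0<..} F = (LBINT x=0..1. F (g x) * g' x)"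
    using sub set_borel_integral_eq_integral(2)[of "{0<..}" F]
    by (simp add: interval_lebesgue_integral_def zero_ereal_def)
  also have "\<dots> = integral {0<..<1} (\<lambda>u. F (g u) * g' u)"
    using set_borel_integral_eq_integral(2)[OF intB]
    by (simp add: interval_lebesgue_integral_def E01)
  also have "\<dots> = integral {0<..<1} (\<lambda>u. s powr q * (u powr (q - 1) * (1 - u) powr (\<alpha> - q - 1)))"
    by (rule integral_cong) (auto simp: eq)
  also have "\<dots> = s powr q * Beta q (\<alpha> - q)"
  proof -
    have "((\<lambda>u. u powr (q - 1) * (1 - u) powr (\<alpha> - q - 1)) has_integral Beta q (\<alpha> - q)) {0<..<1}"
      using has_integral_Beta_real[of q "\<alpha> - q"] q by (simp add: has_integral_Icc_iff_Ioo)
    thus ?thesis by (simp add: integral_unique)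
  qed
  finally have "integral {0<..} F = s powr q * Beta q (\<alpha> - q)" .
  moreover have "F integrable_on {0<..}"
    using sub set_borel_integral_eq_integral(1)[of "{0<..}" F] by (simp add: zero_ereal_def)
  ultimately show ?thesis unfolding F_def[symmetric] by (simp add: has_integral_iff)
qed



lemma powr_interp:
  fixes x y r l :: real
  assumes "x > 0" "y > 0"
  shows "(x powr (1-l) * y powr l) powr r = (x powr r) powr (1-l) * (y powr r) powr l"
  using assms by (simp add: powr_mult powr_powr mult.commute)

lemma logconv_m:
  fixes a b x y l \<beta> \<gamma> :: real
  assumes "a \<ge> 0" "b \<ge> 0" "x > 0" "y > 0" "0 \<le> l" "l \<le> 1"
  shows "a * (x powr (1-l) * y powr l) powr (-\<beta>) + b * (x powr (1-l) * y powr l) powr \<gamma>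
        \<le> (1-l) * (a * x powr (-\<beta>) + b * x powr \<gamma>) + l * (a * y powr (-\<beta>) + b * y powr \<gamma>)"
proof -
  have Y: "(x powr (1-l) * y powr l) powr r \<le> (1-l) * x powr r + l * y powr r" for r
    using powr_interp[OF assms(3,4), of l r] Youngs_inequality_0[of "1-l" l "x powr r" "y powr r"] assms
    by simp
  have "a * (x powr (1-l) * y powr l) powr (-\<beta>) \<le> a * ((1-l) * x powr (-\<beta>) + l * y powr (-\<beta>))"
    using Y assms(1) by (intro mult_left_mono) auto
  moreover have "b * (x powr (1-l) * y powr l) powr \<gamma> \<le> b * ((1-l) * x powr \<gamma> + l * y powr \<gamma>)"
    using Y assms(2) by (intro mult_left_mono) auto
  ultimately show ?thesis by (simp add: algebra_simps)
qed

lemma interp_exists: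
  fixes x y t :: real
  assumes "0 < x" "x < y" "x \<le> t" "t \<le> y"
  shows "\<exists>l. 0 \<le> l \<and> l \<le> 1 \<and> t = x powr (1-l) * y powr l"
proof -
  define l where "l = (ln t - ln x) / (ln y - ln x)"
  have d: "ln y - ln x > 0" using assms by simp
  have "ln x \<le> ln t" "ln t \<le> ln y" using assms by auto
  hence l01: "0 \<le> l" "l \<le> 1" using d by (auto simp: l_def divide_simps)
  have "x powr (1-l) * y powr l = exp ((1-l) * ln x + l * ln y)"
    using assms by (simp add: powr_def exp_add)
  also have "(1-l) * ln x + l * ln y = ln x + l * (ln y - ln x)" by (simp add: algebra_simps)
  also have "l * (ln y - ln x) = ln t - ln x" using d by (simp add: l_def)
  finally have "x powr (1-l) * y powr l = t" using assms by simp
  thus ?thesis using l01 by auto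
qed

lemma struct_left:
  fixes S :: "real set" and \<gamma> :: real
  assumes "S \<subseteq> {0<..}" "S \<noteq> {}" "\<And>t x. 0 < t \<Longrightarrow> x \<in> S \<Longrightarrow> t < x \<Longrightarrow> t \<in> S" "\<gamma> > 0"
  shows "\<exists>b\<ge>0. \<forall>t>0. (t \<in> S \<longrightarrow> b * t powr \<gamma> \<le> 1) \<and> (t \<notin> S \<longrightarrow> b * t powr \<gamma> \<ge> 1)"
proof (cases "bdd_above S")
  case True
  define t2 where "t2 = Sup S"
  obtain x0 where x0: "x0 \<in> S" using assms(2) by auto
  have up: "x \<le> t2" if "x \<in> S" for x using True that by (simp add: t2_def cSup_upper)
  have t2pos: "t2 > 0" using up[OF x0] x0 assms(1) by force
  define b where "b = t2 powr (-\<gamma>)"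
  have bt: "b * t powr \<gamma> = (t / t2) powr \<gamma>" if "t > 0" for t
  proof -
    have "b * t powr \<gamma> = t powr \<gamma> / t2 powr \<gamma>" by (simp add: b_def powr_minus divide_inverse mult.commute)
    also have "\<dots> = (t / t2) powr \<gamma>" using that t2pos by (simp add: powr_divide)
    finally show ?thesis .
  qed
  show ?thesis
  proof (intro exI[of _ b] conjI allI impI)
    show "b \<ge> 0" by (simp add: b_def)
    fix t :: real assume t: "t > 0"
    { assume "t \<in> S"
      hence "t / t2 \<le> 1" using up t2pos by simp
      thus "b * t powr \<gamma> \<le> 1" using bt[OF t] t t2pos assms(4) powr_mono2[of \<gamma> "t/t2" 1]
        by simp }
    { assume "t \<notin> S"
      have "\<not> t < t2"
      proof
        assume "t < t2"
        then obtain x where "x \<in> S" "t < x" using less_cSup_iff[of S t] assms(2) True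
          by (auto simp: t2_def)
        thus False using assms(3)[OF t] \<open>t \<notin> S\<close> by auto
      qed
      hence "t / t2 \<ge> 1" using t2pos by simp
      thus "b * t powr \<gamma> \<ge> 1" using bt[OF t] assms(4) powr_mono2[of \<gamma> 1 "t/t2"]
        by simp }
  qed
next
  case False
  have "t \<in> S" if "t > 0" for t
  proof -
    obtain x where "x \<in> S" "t < x" using False unfolding bdd_above_def by (meson not_le)
    thus ?thesis using assms(3)[OF that] by auto
  qed
  thus ?thesis by (intro exI[of _ 0]) auto
qed

lemma struct_right:
  fixes S :: "real set" and \<beta> :: real
  assumes "S \<subseteq> {0<..}" "S \<noteq> {}" "\<And>t x. x \<in> S \<Longrightarrow> x < t \<Longrightarrow> t \<in> S" "\<beta> > 0"
  shows "\<exists>a\<ge>0. \<forall>t>0. (t \<in> S \<longrightarrow> a * t powr (-\<beta>) \<le> 1) \<and> (t \<notin> S \<longrightarrow> a * t powr (-\<beta>) \<ge> 1)"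
proof -
  have bb: "bdd_below S" by (rule bdd_belowI[of _ 0]) (use assms(1) in auto)
  define t1 where "t1 = Inf S"
  have low: "t1 \<le> x" if "x \<in> S" for x using bb that by (simp add: t1_def cInf_lower)
  have t1nn: "t1 \<ge> 0" unfolding t1_def using assms(1,2) by (intro cInf_greatest) auto
  define a where "a = t1 powr \<beta>"
  have at: "a * t powr (-\<beta>) = t1 powr \<beta> / t powr \<beta>" if "t > 0" for t
    using that by (simp add: a_def powr_minus divide_inverse)
  show ?thesis
  proof (intro exI[of _ a] conjI allI impI)
    show "a \<ge> 0" by (simp add: a_def)
    fix t :: real assume t: "t > 0"
    { assume "t \<in> S"
      hence "t1 powr \<beta> \<le> t powr \<beta>" using low t1nn assms(4) by (simp add: powr_mono2)
      thus "a * t powr (-\<beta>) \<le> 1" using at[OF t] t by simp }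
    { assume "t \<notin> S"
      have "\<not> t1 < t"
      proof
        assume "t1 < t"
        then obtain x where "x \<in> S" "x < t" using cInf_less_iff[of S t] assms(2) bb
          by (auto simp: t1_def)
        thus False using assms(3) \<open>t \<notin> S\<close> by auto
      qed
      hence "t powr \<beta> \<le> t1 powr \<beta>" using t assms(4) by (simp add: powr_mono2)
      thus "a * t powr (-\<beta>) \<ge> 1" using at[OF t] t by simp }
  qed
qed



lemma struct_gen:
  fixes S :: "real set" and \<beta> \<gamma> u v :: real
  assumes S: "S \<subseteq> {0<..}" and uv: "u \<in> S" "v \<in> S" "u < v"
    and cvx: "\<And>x y t. x \<in> S \<Longrightarrow> y \<in> S \<Longrightarrow> x \<le> t \<Longrightarrow> t \<le> y \<Longrightarrow> t \<in> S"
    and bg: "\<beta> > 0" "\<gamma> > 0"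
  shows "\<exists>a\<ge>0. \<exists>b\<ge>0. \<forall>t>0.
     (t \<in> S \<longrightarrow> a * t powr (-\<beta>) + b * t powr \<gamma> \<le> 1) \<and>
     (t \<notin> S \<longrightarrow> a * t powr (-\<beta>) + b * t powr \<gamma> \<ge> 1)"
proof -
  have Sne: "S \<noteq> {}" using uv by auto
  consider (C1) "\<forall>t>0. \<exists>x\<in>S. x < t" | (C2) "\<not> bdd_above S"
    | (C3) "\<exists>e>0. \<forall>x\<in>S. e \<le> x" "bdd_above S"
    by (meson not_le)
  thus ?thesis
  proof cases
    case C1
    have "t \<in> S" if tx: "0 < t" "x \<in> S" "t < x" for t x
    proof -
      obtain x' where "x' \<in> S" "x' < t" using C1 tx(1) by auto
      thus ?thesis using cvx[of x' x t] tx by auto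
    qed
    from struct_left[OF S Sne this bg(2)] obtain b where bb:
      "b \<ge> 0 \<and> (\<forall>t>0. (t \<in> S \<longrightarrow> b * t powr \<gamma> \<le> 1) \<and> (t \<notin> S \<longrightarrow> b * t powr \<gamma> \<ge> 1))" ..
    note b0 = conjunct1[OF bb] and bP = conjunct2[OF bb]
    show ?thesis
      by (rule exI[of _ 0], simp, rule exI[of _ b]) (simp add: b0 bP)
  next
    case C2
    have "t \<in> S" if tx: "x \<in> S" "x < t" for t x
    proof -
      obtain y where "y \<in> S" "t < y" using C2 unfolding bdd_above_def by (meson not_le)
      thus ?thesis using cvx[of x y t] tx by auto
    qed
    from struct_right[OF S Sne this bg(1)] obtain a where aa:
      "a \<ge> 0 \<and> (\<forall>t>0. (t \<in> S \<longrightarrow> a * t powr (-\<beta>) \<le> 1) \<and> (t \<notin> S \<longrightarrow> a * t powr (-\<beta>) \<ge> 1))" ..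
    note a0 = conjunct1[OF aa] and aP = conjunct2[OF aa]
    show ?thesis
      by (rule exI[of _ a], simp add: a0, rule exI[of _ 0]) (simp add: aP)
  next
    case C3
    obtain e where e: "e > 0" "\<forall>x\<in>S. e \<le> x" using C3(1) by auto
    have bb: "bdd_below S" by (rule bdd_belowI[of _ 0]) (use S in auto)
    define t1 where "t1 = Inf S"
    define t2 where "t2 = Sup S"
    have low: "t1 \<le> x" if "x \<in> S" for x using bb that by (simp add: t1_def cInf_lower)
    have up: "x \<le> t2" if "x \<in> S" for x using C3(2) that by (simp add: t2_def cSup_upper)
    have t1e: "e \<le> t1" unfolding t1_def using e Sne by (intro cInf_greatest) auto
    have t1pos: "t1 > 0" using t1e e by simp
    have t12: "t1 < t2" using low[OF uv(1)] up[OF uv(2)] uv(3) by simp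
    have t2pos: "t2 > 0" using t1pos t12 by simp
    have mid: "t \<in> S" if tt: "t1 < t" "t < t2" for t
    proof -
      obtain x where "x \<in> S" "x < t" using cInf_less_iff[of S t] Sne bb tt(1) by (auto simp: t1_def)
      moreover obtain y where "y \<in> S" "t < y" using less_cSup_iff[of S t] Sne C3(2) tt(2)
        by (auto simp: t2_def)
      ultimately show ?thesis using cvx[of x y t] by auto
    qed
    define A1 where "A1 = t1 powr (-\<beta>)"
    define A2 where "A2 = t2 powr (-\<beta>)"
    define B1 where "B1 = t1 powr \<gamma>"
    define B2 where "B2 = t2 powr \<gamma>"
    have A: "A2 < A1" "0 < A2" unfolding A1_def A2_def using t12 t1pos bg
      by (auto intro!: powr_less_mono2_neg)
    have B: "B1 < B2" "0 < B1" unfolding B1_def B2_def using t12 t1pos bg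
      by (auto intro!: powr_less_mono2)
    define det where "det = A1 * B2 - A2 * B1"
    have "A2 * B1 < A1 * B2" using A B by (intro mult_strict_mono) auto
    hence det: "det > 0" unfolding det_def by linarith
    define a where "a = (B2 - B1) / det"
    define b where "b = (A1 - A2) / det"
    have ab: "a \<ge> 0" "b \<ge> 0" using A B det by (auto simp: a_def b_def)
    define M where "M = (\<lambda>t. a * t powr (-\<beta>) + b * t powr \<gamma>)"
    have M1: "M t1 = 1"
    proof -
      have "M t1 = ((B2 - B1) * A1 + (A1 - A2) * B1) / det"
        unfolding M_def A1_def[symmetric] B1_def[symmetric] a_def b_def by (simp add: add_divide_distrib)
      also have "(B2 - B1) * A1 + (A1 - A2) * B1 = det" by (simp add: det_def algebra_simps)
      finally show ?thesis using det by simp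
    qed
    have M2: "M t2 = 1"
    proof -
      have "M t2 = ((B2 - B1) * A2 + (A1 - A2) * B2) / det"
        unfolding M_def A2_def[symmetric] B2_def[symmetric] a_def b_def by (simp add: add_divide_distrib)
      also have "(B2 - B1) * A2 + (A1 - A2) * B2 = det" by (simp add: det_def algebra_simps)
      finally show ?thesis using det by simp
    qed
    have LC: "M (x powr (1-l) * y powr l) \<le> (1-l) * M x + l * M y"
      if "x > 0" "y > 0" "0 \<le> l" "l \<le> 1" for x y l
      unfolding M_def using logconv_m[OF ab that] .
    have in_le: "M t \<le> 1" if tt: "t1 \<le> t" "t \<le> t2" for t
    proof -
      obtain l where l: "0 \<le> l" "l \<le> 1" "t = t1 powr (1-l) * t2 powr l"
        using interp_exists[OF t1pos t12 tt] by auto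
      have "M t \<le> (1-l) * M t1 + l * M t2" using LC[OF t1pos t2pos l(1,2)] l(3) by simp
      thus ?thesis using M1 M2 by simp
    qed
    have out_ge: "M t \<ge> 1" if tp: "t > 0" "\<not> (t1 < t \<and> t < t2)" for t
    proof (cases "t \<le> t1")
      case True
      have tt2: "t < t2" using True t12 by simp
      obtain l where l: "0 \<le> l" "l \<le> 1" "t1 = t powr (1-l) * t2 powr l"
        using interp_exists[OF tp(1) tt2 True] t12 by auto
      have "l \<noteq> 1" using l(3) t12 t2pos tp(1) by auto
      hence l1: "l < 1" using l by simp
      have "1 \<le> (1-l) * M t + l * 1" using LC[OF tp(1) t2pos l(1,2)] l(3) M1 M2 by simp
      hence "(1 - l) * 1 \<le> (1-l) * M t" by (simp add: algebra_simps)
      thus ?thesis using l1 by simp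
    next
      case False
      hence tt2: "t2 \<le> t" using tp(2) by simp
      have t1t: "t1 < t" using False by simp
      obtain l where l: "0 \<le> l" "l \<le> 1" "t2 = t1 powr (1-l) * t powr l"
        using interp_exists[OF t1pos t1t _ tt2] t12 by auto
      have "l \<noteq> 0" using l(3) t12 t1pos tp(1) by auto
      hence l0: "l > 0" using l by simp
      have "1 \<le> (1-l) * 1 + l * M t" using LC[OF t1pos tp(1) l(1,2)] l(3) M1 M2 by simp
      hence "l * 1 \<le> l * M t" by (simp add: algebra_simps)
      thus ?thesis using l0 by simp
    qed
    have P: "\<forall>t>0. (t \<in> S \<longrightarrow> a * t powr (-\<beta>) + b * t powr \<gamma> \<le> 1) \<and>
     (t \<notin> S \<longrightarrow> a * t powr (-\<beta>) + b * t powr \<gamma> \<ge> 1)"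
    proof (intro allI impI conjI)
      fix t :: real assume t: "t > 0"
      { assume "t \<in> S" thus "a * t powr (-\<beta>) + b * t powr \<gamma> \<le> 1"
          using in_le[OF low up] unfolding M_def by auto }
      { assume "t \<notin> S" thus "a * t powr (-\<beta>) + b * t powr \<gamma> \<ge> 1"
          using out_ge[OF t] mid unfolding M_def by auto }
    qed
    show ?thesis
      by (rule exI[of _ a], rule conjI[OF ab(1)], rule exI[of _ b], rule conjI[OF ab(2)], rule P)
  qed
qed



definition gm :: "real \<Rightarrow> real \<Rightarrow> real \<Rightarrow> real \<Rightarrow> real" where
  "gm \<alpha> C s t = (C * (1 + t / s)) powr (-\<alpha>)"

lemma gm_pos: assumes "C > 0" "s > 0" "t \<ge> 0" shows "gm \<alpha> C s t > 0"
proof -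
  have h: "1 + t/s > 0" using assms by (metis add_pos_nonneg divide_nonneg_pos zero_less_one)
  thus ?thesis unfolding gm_def using assms h by simp
qed

lemma gm_int:
  assumes "0 < q" "q < \<alpha>" "C > 0" "s > 0"
  shows "((\<lambda>t. t powr (q-1) * gm \<alpha> C s t) has_integral (C powr (-\<alpha>) * (s powr q * Beta q (\<alpha> - q)))) {0<..}"
proof -
  have "((\<lambda>t. C powr (-\<alpha>) * (t powr (q-1) * (1 + t/s) powr (-\<alpha>))) has_integral
          (C powr (-\<alpha>) * (s powr q * Beta q (\<alpha> - q)))) {0<..}"
    by (intro has_integral_mult_right beta_model assms)
  moreover have "C powr (-\<alpha>) * (t powr (q-1) * (1 + t/s) powr (-\<alpha>)) = t powr (q-1) * gm \<alpha> C s t"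
    if "t \<in> {0<..}" for t
  proof -
    have "1 + t/s > 0" using that assms by (simp add: add_pos_pos)
    thus ?thesis using assms by (simp add: gm_def powr_mult)
  qed
  ultimately show ?thesis
    using has_integral_cong[of "{0<..}" "\<lambda>t. C powr (-\<alpha>) * (t powr (q-1) * (1 + t/s) powr (-\<alpha>))"
      "\<lambda>t. t powr (q-1) * gm \<alpha> C s t"] by simp
qed

lemma phi_le:
  fixes \<alpha> F P :: real
  assumes "\<alpha> > 0" "F > 0" "P > 0" "F \<ge> P powr (-\<alpha>)"
  shows "F powr (-1/\<alpha>) \<le> P"
proof -
  have "F powr (-1/\<alpha>) \<le> (P powr (-\<alpha>)) powr (-1/\<alpha>)"
    using assms by (intro powr_mono2') auto
  also have "\<dots> = P" using assms by (simp add: powr_powr)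
  finally show ?thesis .
qed

lemma phi_less:
  fixes \<alpha> F P :: real
  assumes "\<alpha> > 0" "F > 0" "P > 0" "F > P powr (-\<alpha>)"
  shows "F powr (-1/\<alpha>) < P"
proof -
  have "F powr (-1/\<alpha>) < (P powr (-\<alpha>)) powr (-1/\<alpha>)"
    using assms by (intro powr_less_mono2_neg) auto
  also have "\<dots> = P" using assms by (simp add: powr_powr)
  finally show ?thesis .
qed

lemma NC_app:
  assumes NC: "neg_inv_concave_on \<alpha> {0..} f" and xy: "x \<ge> 0" "y \<ge> 0"
    and fp: "f x > 0" "f y > 0" and l: "0 \<le> l" "l \<le> 1"
  shows "f ((1-l)*x + l*y) \<ge> ((1-l) * f x powr (-1/\<alpha>) + l * f y powr (-1/\<alpha>)) powr (-\<alpha>)"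
proof -
  have H: "\<forall>x\<in>{0..}. \<forall>y\<in>{0..}. f x * f y > 0 \<longrightarrow> (\<forall>l\<in>{0..1}.
        f ((1 - l) * x + l * y) \<ge>
          ((1 - l) * f x powr (-1/\<alpha>) + l * f y powr (-1/\<alpha>)) powr (-\<alpha>))"
    using NC unfolding neg_inv_concave_on_def by (rule conjunct2)
  have fxy: "f x * f y > 0" using fp by (rule mult_pos_pos)
  show ?thesis by (rule H[rule_format]) (use xy l fxy in auto)
qed

lemma CMP:
  assumes a: "\<alpha> > 0" and NC: "neg_inv_concave_on \<alpha> {0..} f"
    and Cs: "C > 0" "s > 0" and xy: "x \<ge> 0" "y \<ge> 0" and l: "0 \<le> l" "l \<le> 1"
    and fpos: "f x > 0" "f y > 0" and ge: "f x \<ge> gm \<alpha> C s x" "f y \<ge> gm \<alpha> C s y"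
    and strict: "(l < 1 \<and> f x > gm \<alpha> C s x) \<or> (0 < l \<and> f y > gm \<alpha> C s y)"
  shows "f ((1-l)*x + l*y) > gm \<alpha> C s ((1-l)*x + l*y)"
proof -
  define \<psi> where "\<psi> = (\<lambda>t. C * (1 + t / s))"
  have \<psi>pos: "\<psi> t > 0" if "t \<ge> 0" for t using that Cs by (simp add: \<psi>_def add_pos_nonneg)
  have gmpsi: "gm \<alpha> C s t = \<psi> t powr (-\<alpha>)" for t by (simp add: gm_def \<psi>_def)
  define px where "px = f x powr (-1/\<alpha>)"
  define py where "py = f y powr (-1/\<alpha>)"
  have pxl: "px \<le> \<psi> x" unfolding px_def using phi_le[OF a fpos(1) \<psi>pos[OF xy(1)]] ge(1) gmpsi by simp
  have pyl: "py \<le> \<psi> y" unfolding py_def using phi_le[OF a fpos(2) \<psi>pos[OF xy(2)]] ge(2) gmpsi by simp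
  have pxp: "px > 0" "py > 0" using fpos by (auto simp: px_def py_def)
  have lin: "(1-l) * \<psi> x + l * \<psi> y = \<psi> ((1-l)*x + l*y)"
    by (simp add: \<psi>_def divide_inverse algebra_simps)
  have lt: "(1-l) * px + l * py < \<psi> ((1-l)*x + l*y)"
  proof -
    from strict show ?thesis
    proof
      assume st: "l < 1 \<and> f x > gm \<alpha> C s x"
      have "px < \<psi> x" unfolding px_def using phi_less[OF a fpos(1) \<psi>pos[OF xy(1)]] st gmpsi by simp
      hence "(1-l) * px < (1-l) * \<psi> x" using st by simp
      moreover have "l * py \<le> l * \<psi> y" using pyl l by (simp add: mult_left_mono)
      ultimately show ?thesis using lin by linarith
    next
      assume st: "0 < l \<and> f y > gm \<alpha> C s y"
      have "py < \<psi> y" unfolding py_def using phi_less[OF a fpos(2) \<psi>pos[OF xy(2)]] st gmpsi by simp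
      hence "l * py < l * \<psi> y" using st by simp
      moreover have "(1-l) * px \<le> (1-l) * \<psi> x" using pxl l by (simp add: mult_left_mono)
      ultimately show ?thesis using lin by linarith
    qed
  qed
  have pos: "(1-l) * px + l * py > 0"
  proof (cases "l = 0")
    case True thus ?thesis using pxp by simp
  next
    case False
    hence "l * py > 0" using l pxp by simp
    moreover have "(1-l) * px \<ge> 0" using l pxp by simp
    ultimately show ?thesis by linarith
  qed
  have "f ((1-l)*x + l*y) \<ge> ((1-l) * px + l * py) powr (-\<alpha>)"
    unfolding px_def py_def by (rule NC_app[OF NC xy fpos l])
  moreover have "((1-l) * px + l * py) powr (-\<alpha>) > \<psi> ((1-l)*x + l*y) powr (-\<alpha>)"
    using lt pos a by (intro powr_less_mono2_neg) auto
  ultimately show ?thesis using gmpsi[of "(1-l)*x + l*y"] by linarith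
qed

lemma S_convex:
  assumes a: "\<alpha> > 0" and NC: "neg_inv_concave_on \<alpha> {0..} f" and Cs: "C > 0" "s > 0"
    and x: "x > 0" "f x > gm \<alpha> C s x" and y: "y > 0" "f y > gm \<alpha> C s y" and t: "x \<le> t" "t \<le> y"
  shows "f t > gm \<alpha> C s t"
proof (cases "x = y")
  case True thus ?thesis using x t by simp
next
  case False
  hence xy: "x < y" using t by simp
  define l where "l = (t - x) / (y - x)"
  have l: "0 \<le> l" "l \<le> 1" using xy t by (auto simp: l_def divide_simps)
  have "l * (y - x) = t - x" using xy by (simp add: l_def)
  hence teq: "t = (1-l)*x + l*y" by (simp add: algebra_simps)
  have "gm \<alpha> C s x > 0" "gm \<alpha> C s y > 0" using x y by (auto intro!: gm_pos Cs)
  hence fp: "f x > 0" "f y > 0" using x y by linarith+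
  have st: "(l < 1 \<and> f x > gm \<alpha> C s x) \<or> (0 < l \<and> f y > gm \<alpha> C s y)"
    using l x y by linarith
  show ?thesis unfolding teq
    by (rule CMP[OF a NC Cs _ _ l fp _ _ st]) (use x y in auto)
qed

lemma S_down:
  assumes a: "\<alpha> > 0" and NC: "neg_inv_concave_on \<alpha> {0..} f" and Cs: "C > 0" "s > 0"
    and f0: "f 0 = gm \<alpha> C s 0"
    and y: "y > 0" "f y > gm \<alpha> C s y" and t: "0 < t" "t < y"
  shows "f t > gm \<alpha> C s t"
proof -
  define l where "l = t / y"
  have l: "0 \<le> l" "l \<le> 1" "0 < l" using y t by (auto simp: l_def)
  have teq: "t = (1-l)*0 + l*y" using y by (simp add: l_def)
  have "gm \<alpha> C s 0 > 0" "gm \<alpha> C s y > 0" using y by (auto intro!: gm_pos Cs)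
  hence fp: "f 0 > 0" "f y > 0" using y f0 by linarith+
  show ?thesis unfolding teq
    by (rule CMP[OF a NC Cs _ _ l(1,2) fp]) (use y l f0 in auto)
qed



lemma f_nonneg: "neg_inv_concave_on \<alpha> {0..} f \<Longrightarrow> t \<ge> 0 \<Longrightarrow> f t \<ge> 0"
  unfolding neg_inv_concave_on_def by auto

lemma integral_nonneg':
  fixes h :: "real \<Rightarrow> real"
  assumes "\<And>x. x \<in> S \<Longrightarrow> 0 \<le> h x" shows "integral S h \<ge> 0"
proof (cases "h integrable_on S")
  case True thus ?thesis using assms by (intro integral_nonneg) auto
qed (simp add: not_integrable_integral)

lemma integral_nonpos':
  fixes h :: "real \<Rightarrow> real"
  assumes "\<And>x. x \<in> S \<Longrightarrow> h x \<le> 0" shows "integral S h \<le> 0"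
proof -
  have "integral S (\<lambda>x. - h x) \<ge> 0" using assms by (intro integral_nonneg') auto
  thus ?thesis by (simp add: integral_neg)
qed

lemma integral_nonpos_but_one:
  fixes h :: "real \<Rightarrow> real"
  assumes "\<And>x. x \<in> S \<Longrightarrow> x \<noteq> t0 \<Longrightarrow> h x \<le> 0" shows "integral S h \<le> 0"
proof -
  define h' where "h' = (\<lambda>x. if x = t0 then 0 else h x)"
  have "integral S h = integral S h'"
    by (rule integral_spike[of "{t0}"]) (auto simp: h'_def)
  also have "\<dots> \<le> 0" using assms by (intro integral_nonpos') (auto simp: h'_def)
  finally show ?thesis .
qed

lemma f_int_pos:
  fixes f :: "real \<Rightarrow> real"
  assumes "f integrable_on {0..}" shows "f integrable_on {0<..}"
  by (rule integrable_spike_set[OF assms]) (auto intro: negligible_subset[OF negligible_sing[of 0]])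

lemma meas_pf:
  fixes f :: "real \<Rightarrow> real"
  assumes "f integrable_on {0..}"
  shows "(\<lambda>t. t powr (q-1) * f t) \<in> borel_measurable (lebesgue_on {0<..})"
proof -
  have fm: "f \<in> borel_measurable (lebesgue_on {0<..})"
    by (rule integrable_imp_measurable[OF f_int_pos[OF assms]])
  have "continuous_on {0<..} (\<lambda>t::real. t powr (q-1))"
    by (intro continuous_intros) auto
  hence pm: "(\<lambda>t::real. t powr (q-1)) \<in> borel_measurable (lebesgue_on {0<..})"
    by (intro continuous_imp_measurable_on_sets_lebesgue) auto
  show ?thesis by (rule borel_measurable_times[OF pm fm])
qed

lemma int_if_nonzero:
  "integral S h \<noteq> 0 \<Longrightarrow> h integrable_on S"
  using not_integrable_integral by blast

lemma int_mid:
  fixes f :: "real \<Rightarrow> real"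
  assumes fi: "f integrable_on {0..}" and fnn: "\<And>t. t \<ge> 0 \<Longrightarrow> f t \<ge> 0"
    and i0: "(\<lambda>t. t powr (q0-1) * f t) integrable_on {0<..}"
    and i1: "(\<lambda>t. t powr (q1-1) * f t) integrable_on {0<..}"
    and q: "q0 \<le> q" "q \<le> q1"
  shows "(\<lambda>t. t powr (q-1) * f t) integrable_on {0<..}"
proof (rule measurable_bounded_by_integrable_imp_integrable_real[OF meas_pf[OF fi]])
  show "(\<lambda>t. t powr (q0-1) * f t + t powr (q1-1) * f t) integrable_on {0<..}"
    by (intro integrable_add i0 i1)
  show "{0::real<..} \<in> sets lebesgue" by simp
  fix t :: real assume t: "t \<in> {0<..}"
  have ft: "f t \<ge> 0" using fnn t by simp
  have "t powr (q-1) \<le> t powr (q0-1) + t powr (q1-1)"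
  proof (cases "t \<le> 1")
    case True
    hence "t powr (q-1) \<le> t powr (q0-1)" using t q by (intro powr_mono') auto
    thus ?thesis by (simp add: add_increasing2)
  next
    case False
    hence "t powr (q-1) \<le> t powr (q1-1)" using t q by (intro powr_mono) auto
    thus ?thesis by (simp add: add_increasing)
  qed
  hence "t powr (q-1) * f t \<le> (t powr (q0-1) + t powr (q1-1)) * f t" using ft by (intro mult_right_mono)
  thus "\<bar>t powr (q-1) * f t\<bar> \<le> t powr (q0-1) * f t + t powr (q1-1) * f t"
    using ft by (simp add: algebra_simps)
qed

lemma kint:
  fixes f g :: "real \<Rightarrow> real"
  assumes i: "\<And>r. r \<in> {q0, q, q1} \<Longrightarrow> (\<lambda>t. t powr (r-1) * f t) integrable_on {0<..}"
    "\<And>r. r \<in> {q0, q, q1} \<Longrightarrow> (\<lambda>t. t powr (r-1) * g t) integrable_on {0<..}"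
    and pw: "\<And>t. t > 0 \<Longrightarrow> (1 - (a * t powr (q0 - q) + b * t powr (q1 - q))) * (f t - g t) \<ge> 0"
  shows "integral {0<..} (\<lambda>t. t powr (q-1) * f t) - integral {0<..} (\<lambda>t. t powr (q-1) * g t)
    \<ge> a * (integral {0<..} (\<lambda>t. t powr (q0-1) * f t) - integral {0<..} (\<lambda>t. t powr (q0-1) * g t))
      + b * (integral {0<..} (\<lambda>t. t powr (q1-1) * f t) - integral {0<..} (\<lambda>t. t powr (q1-1) * g t))"
proof -
  define D where "D = (\<lambda>r t. t powr (r-1) * f t - t powr (r-1) * g t)"
  have Di: "D r integrable_on {0<..}" if "r \<in> {q0, q, q1}" for r
    unfolding D_def using i[OF that] by (intro integrable_diff)
  have DI: "integral {0<..} (D r) = integral {0<..} (\<lambda>t. t powr (r-1) * f t) - integral {0<..} (\<lambda>t. t powr (r-1) * g t)"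
    if "r \<in> {q0, q, q1}" for r
    unfolding D_def using i[OF that] by (intro integral_diff)
  define h where "h = (\<lambda>t. D q t - a * D q0 t - b * D q1 t)"
  have i0: "(\<lambda>x. a * D q0 x) integrable_on {0<..}" by (intro integrable_on_mult_right Di) auto
  have i1: "(\<lambda>x. b * D q1 x) integrable_on {0<..}" by (intro integrable_on_mult_right Di) auto
  have iq: "D q integrable_on {0<..}" by (intro Di) auto
  have hi: "h integrable_on {0<..}" unfolding h_def
    by (intro integrable_diff iq i0 i1)
  have hI: "integral {0<..} h = integral {0<..} (D q) - a * integral {0<..} (D q0) - b * integral {0<..} (D q1)"
    unfolding h_def
    by (simp add: integral_diff integrable_diff iq i0 i1 integral_mult_right)
  have "h t \<ge> 0" if t: "t \<in> {0<..}" for t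
  proof -
    have t0: "t > 0" using t by simp
    have "h t = t powr (q-1) * ((1 - (a * t powr (q0 - q) + b * t powr (q1 - q))) * (f t - g t))"
    proof -
      have e1: "t powr (q-1) * t powr (q0 - q) = t powr (q0 - 1)" using t0 by (simp add: powr_add[symmetric])
      have e2: "t powr (q-1) * t powr (q1 - q) = t powr (q1 - 1)" using t0 by (simp add: powr_add[symmetric])
      show ?thesis unfolding h_def D_def
        by (simp add: algebra_simps e1[symmetric] e2[symmetric])
    qed
    thus ?thesis using pw[OF t0] by simp
  qed
  hence "integral {0<..} h \<ge> 0" by (intro integral_nonneg hi) auto
  thus ?thesis using hI DI by (simp add: algebra_simps)
qed



lemma bound0:
  fixes f :: "real \<Rightarrow> real"
  assumes a: "\<alpha> > 0" and NC: "neg_inv_concave_on \<alpha> {0..} f"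
    and i1: "(\<lambda>t. t powr (q1-1) * f t) integrable_on {0<..}"
    and q: "0 < q1" "q1 < \<alpha>" and y: "y > 0" "f y > 0"
  shows "\<exists>\<delta>>0. \<forall>t. 0 < t \<longrightarrow> t < \<delta> \<longrightarrow> f t \<le> \<delta> powr (-\<alpha>)"
proof (rule ccontr)
  assume "\<not> ?thesis"
  hence H: "\<And>\<delta>. \<delta> > 0 \<Longrightarrow> \<exists>t. 0 < t \<and> t < \<delta> \<and> f t > \<delta> powr (-\<alpha>)"
    by (meson not_le)
  define I where "I = integral {0<..} (\<lambda>t. t powr (q1-1) * f t)"
  have fnn: "\<And>t. t \<ge> 0 \<Longrightarrow> f t \<ge> 0" using f_nonneg[OF NC] .
  have I0: "I \<ge> 0" unfolding I_def
  proof (rule integral_nonneg')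
    fix x :: real assume "x \<in> {0<..}"
    hence "f x \<ge> 0" using fnn by simp
    thus "0 \<le> x powr (q1-1) * f x" by simp
  qed
  define B where "B = f y powr (-1/\<alpha>)"
  have Bp: "B > 0" using y by (simp add: B_def)
  define K where "K = 1 + 2 * B / y"
  have Kp: "K > 0" using Bp y by (simp add: K_def add_pos_pos)
  define e where "e = q1 - 1 - \<alpha>"
  define c0 where "c0 = K powr (-\<alpha>) * 2 powr e"
  have c0p: "c0 > 0" using Kp by (simp add: c0_def)
  define W where "W = I / c0 + 1"
  have Wp: "W > 0" using I0 c0p by (simp add: W_def add_nonneg_pos)
  define \<delta>0 where "\<delta>0 = W powr (1 / (q1 - \<alpha>))"
  define \<delta> where "\<delta> = min \<delta>0 (y/4)"
  have \<delta>0p: "\<delta>0 > 0" using Wp by (simp add: \<delta>0_def)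
  have \<delta>p: "\<delta> > 0" using \<delta>0p y by (simp add: \<delta>_def)
  have \<delta>y: "\<delta> \<le> y/4" by (simp add: \<delta>_def)
  have Wle: "W \<le> \<delta> powr (q1 - \<alpha>)"
  proof -
    have "\<delta>0 powr (q1 - \<alpha>) \<le> \<delta> powr (q1 - \<alpha>)"
      using q \<delta>p by (intro powr_mono2') (auto simp: \<delta>_def)
    moreover have "\<delta>0 powr (q1 - \<alpha>) = W" using q Wp by (simp add: \<delta>0_def powr_powr)
    ultimately show ?thesis by simp
  qed
  obtain t0 where t0: "0 < t0" "t0 < \<delta>" "f t0 > \<delta> powr (-\<alpha>)" using H[OF \<delta>p] by auto
  define \<phi>0 where "\<phi>0 = f t0 powr (-1/\<alpha>)"
  have "\<delta> powr (-\<alpha>) > 0" using \<delta>p by simp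
  hence ft0: "f t0 > 0" using t0(3) by linarith
  have \<phi>0: "\<phi>0 < \<delta>" unfolding \<phi>0_def by (rule phi_less[OF a ft0 \<delta>p t0(3)])
  have \<phi>0p: "\<phi>0 > 0" using ft0 by (simp add: \<phi>0_def)
  have pw: "t powr (q1-1) * f t \<ge> c0 * \<delta> powr e" if t: "\<delta> \<le> t" "t \<le> 2 * \<delta>" for t
  proof -
    have tp: "t > 0" using t \<delta>p by simp
    have ty: "t < y" using t \<delta>y y by simp
    define l where "l = (t - t0) / (y - t0)"
    have yt0: "y - t0 > y / 2" using t0 \<delta>y by simp
    have l: "0 \<le> l" "l \<le> 1" using t t0 ty by (auto simp: l_def divide_simps)
    have "l * (y - t0) = t - t0" using yt0 y by (simp add: l_def)
    hence teq: "(1-l) * t0 + l * y = t" by (simp add: algebra_simps)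
    have X: "f ((1-l)*t0 + l*y) \<ge> ((1-l) * f t0 powr (-1/\<alpha>) + l * f y powr (-1/\<alpha>)) powr (-\<alpha>)"
      by (rule NC_app[OF NC _ _ ft0 y(2) l]) (use t0 y in auto)
    have "f t \<ge> ((1-l) * \<phi>0 + l * B) powr (-\<alpha>)"
      using X by (simp only: teq \<phi>0_def[symmetric] B_def[symmetric])
    moreover have "(K * t) powr (-\<alpha>) \<le> ((1-l) * \<phi>0 + l * B) powr (-\<alpha>)"
    proof (rule powr_mono2')
      show "- \<alpha> \<le> 0" using a by simp
      show "0 < (1-l) * \<phi>0 + l * B"
      proof (cases "l = 0")
        case True thus ?thesis using \<phi>0p by simp
      next
        case False
        hence "l * B > 0" using l Bp by simp
        moreover have "(1-l) * \<phi>0 \<ge> 0" using l \<phi>0p by simp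
        ultimately show ?thesis by linarith
      qed
      have "l \<le> t / (y - t0)" using t0 yt0 y by (simp add: l_def divide_right_mono)
      also have "\<dots> \<le> t / (y / 2)" using yt0 tp y by (intro divide_left_mono) auto
      finally have "l \<le> 2 * t / y" by (simp add: mult.commute)
      hence "l * B \<le> (2 * t / y) * B" using Bp by (intro mult_right_mono) auto
      moreover have "(1-l) * \<phi>0 \<le> t"
      proof -
        have "(1-l) * \<phi>0 \<le> \<phi>0" using l \<phi>0p by (intro mult_left_le_one_le) auto
        thus ?thesis using \<phi>0 t by linarith
      qed
      ultimately show "(1-l) * \<phi>0 + l * B \<le> K * t" by (simp add: K_def algebra_simps)
    qed
    ultimately have ft: "f t \<ge> (K * t) powr (-\<alpha>)" by simp
    have "t powr (q1-1) * f t \<ge> t powr (q1-1) * (K * t) powr (-\<alpha>)"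
      using ft by (intro mult_left_mono) auto
    also have "t powr (q1-1) * (K * t) powr (-\<alpha>) = K powr (-\<alpha>) * t powr e"
      using tp Kp by (simp add: powr_mult e_def powr_add[symmetric] algebra_simps)
    also have "t powr e \<ge> (2 * \<delta>) powr e"
      using q t \<delta>p by (intro powr_mono2') (auto simp: e_def)
    hence "K powr (-\<alpha>) * t powr e \<ge> K powr (-\<alpha>) * (2 * \<delta>) powr e" by (intro mult_left_mono) auto
    also have "K powr (-\<alpha>) * (2 * \<delta>) powr e = c0 * \<delta> powr e"
      using \<delta>p by (simp add: c0_def powr_mult)
    finally show ?thesis .
  qed
  have sub: "{\<delta>..2*\<delta>} \<subseteq> {0<..}" using \<delta>p by auto
  have "integral {\<delta>..2*\<delta>} (\<lambda>t. c0 * \<delta> powr e) \<le> integral {\<delta>..2*\<delta>} (\<lambda>t. t powr (q1-1) * f t)"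
    using pw by (intro integral_le integrable_on_subinterval[OF i1 sub]) auto
  also have "\<dots> \<le> I" unfolding I_def
    using sub fnn by (intro integral_subset_le integrable_on_subinterval[OF i1 sub] i1) auto
  finally have "\<delta> * (c0 * \<delta> powr e) \<le> I" using \<delta>p by (simp add: mult.left_commute)
  moreover have "\<delta> * (c0 * \<delta> powr e) = c0 * \<delta> powr (q1 - \<alpha>)"
  proof -
    have "\<delta> powr (q1 - \<alpha>) = \<delta> powr (1 + e)" by (simp add: e_def)
    also have "\<dots> = \<delta> powr 1 * \<delta> powr e" by (rule powr_add)
    also have "\<dots> = \<delta> * \<delta> powr e" using \<delta>p by simp
    finally show ?thesis by (simp add: mult.left_commute)
  qed
  moreover have "c0 * W \<le> c0 * \<delta> powr (q1 - \<alpha>)" using Wle c0p by simp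
  moreover have "c0 * W = I + c0" using c0p by (simp add: W_def field_simps)
  ultimately show False using c0p by simp
qed

lemma int_anch:
  fixes f :: "real \<Rightarrow> real"
  assumes a: "\<alpha> > 0" and NC: "neg_inv_concave_on \<alpha> {0..} f" and fi: "f integrable_on {0..}"
    and i1: "(\<lambda>t. t powr (q1-1) * f t) integrable_on {0<..}"
    and q: "0 < q" "q < q1" "q1 < \<alpha>" and y: "y > 0" "f y > 0"
  shows "(\<lambda>t. t powr (q-1) * f t) integrable_on {0<..}"
proof -
  obtain \<delta> where \<delta>: "\<delta> > 0" "\<And>t. 0 < t \<Longrightarrow> t < \<delta> \<Longrightarrow> f t \<le> \<delta> powr (-\<alpha>)"
    using bound0[OF a NC i1 _ q(3) y] q by auto
  have fnn: "\<And>t. t \<ge> 0 \<Longrightarrow> f t \<ge> 0" using f_nonneg[OF NC] .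
  define G where "G = (\<lambda>t. \<delta> powr (-\<alpha>) * (if t \<in> {..<\<delta>} then t powr (q-1) else 0)
                          + \<delta> powr (q - q1) * (t powr (q1-1) * f t))"
  have pint: "(\<lambda>t. t powr (q-1)) integrable_on {0<..<\<delta>}"
  proof (rule integrable_spike_set[OF integrable_on_powr_from_0'[of "q-1" \<delta>]])
    show "negligible {x \<in> {0<..\<delta>} - {0<..<\<delta>}. x powr (q - 1) \<noteq> 0}"
      by (rule negligible_subset[OF negligible_sing[of \<delta>]]) auto
    show "negligible {x \<in> {0<..<\<delta>} - {0<..\<delta>}. x powr (q - 1) \<noteq> 0}"
      by (rule negligible_subset[of "{}"]) auto
  qed (use q \<delta> in auto)
  have Gi: "G integrable_on {0<..}"
  proof -
    have "(\<lambda>t. if t \<in> {..<\<delta>} then t powr (q-1) else 0) integrable_on {0<..}"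
      using pint by (subst integrable_restrict_Int) (simp add: Int_commute greaterThanLessThan_def)
    thus ?thesis unfolding G_def
      by (intro integrable_add integrable_on_mult_right i1)
  qed
  show ?thesis
  proof (rule measurable_bounded_by_integrable_imp_integrable_real[OF meas_pf[OF fi] Gi])
    show "{0::real<..} \<in> sets lebesgue" by simp
    fix t :: real assume t: "t \<in> {0<..}"
    have tp: "t > 0" using t by simp
    have ft: "f t \<ge> 0" using fnn tp by simp
    have A: "0 \<le> \<delta> powr (q - q1) * (t powr (q1-1) * f t)" using ft by simp
    show "\<bar>t powr (q-1) * f t\<bar> \<le> G t"
    proof (cases "t < \<delta>")
      case True
      have "t powr (q-1) * f t \<le> t powr (q-1) * \<delta> powr (-\<alpha>)"
        using \<delta>(2)[OF tp True] by (intro mult_left_mono) auto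
      hence h1: "t powr (q-1) * f t \<le> \<delta> powr (-\<alpha>) * t powr (q-1)" by (simp add: mult.commute)
      have Gt: "G t = \<delta> powr (-\<alpha>) * t powr (q-1) + \<delta> powr (q - q1) * (t powr (q1-1) * f t)"
        using True by (simp add: G_def)
      have "\<bar>t powr (q-1) * f t\<bar> = t powr (q-1) * f t" using ft by simp
      thus ?thesis using h1 Gt A by linarith
    next
      case False
      have "t powr (q - q1) \<le> \<delta> powr (q - q1)" using False \<delta> q by (intro powr_mono2') auto
      hence "t powr (q - q1) * (t powr (q1-1) * f t) \<le> \<delta> powr (q - q1) * (t powr (q1-1) * f t)"
        using ft by (intro mult_right_mono) auto
      moreover have "t powr (q - q1) * (t powr (q1-1) * f t) = t powr (q-1) * f t"
        using tp by (simp add: powr_add[symmetric] mult.assoc[symmetric])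
      moreover have "G t = \<delta> powr (q - q1) * (t powr (q1-1) * f t)" using False by (simp add: G_def)
      moreover have "\<bar>t powr (q-1) * f t\<bar> = t powr (q-1) * f t" using ft by simp
      ultimately show ?thesis by linarith
    qed
  qed
qed



definition Mf :: "(real \<Rightarrow> real) \<Rightarrow> real \<Rightarrow> real" where
  "Mf f q = integral {0<..} (\<lambda>t. t powr (q-1) * f t)"

lemma Beta_pos: "a > 0 \<Longrightarrow> b > 0 \<Longrightarrow> Beta a b > (0::real)"
  unfolding Beta_def by (simp add: Gamma_real_pos)

lemma M_gm:
  assumes a: "\<alpha> > 0" and r: "0 < r" "r < \<alpha>" and k: "k > 0" and s: "s > 0"
  shows "(\<lambda>t. t powr (r-1) * gm \<alpha> (k powr (-1/\<alpha>)) s t) integrable_on {0<..}"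
    "integral {0<..} (\<lambda>t. t powr (r-1) * gm \<alpha> (k powr (-1/\<alpha>)) s t) = k * s powr r * Beta r (\<alpha> - r)"
proof -
  have C: "(k powr (-1/\<alpha>)) powr (-\<alpha>) = k" using a k by (simp add: powr_powr)
  have H: "((\<lambda>t. t powr (r-1) * gm \<alpha> (k powr (-1/\<alpha>)) s t) has_integral (k * (s powr r * Beta r (\<alpha> - r)))) {0<..}"
    using gm_int[OF r _ s, of "k powr (-1/\<alpha>)"] k C by simp
  thus "(\<lambda>t. t powr (r-1) * gm \<alpha> (k powr (-1/\<alpha>)) s t) integrable_on {0<..}" by blast
  show "integral {0<..} (\<lambda>t. t powr (r-1) * gm \<alpha> (k powr (-1/\<alpha>)) s t) = k * s powr r * Beta r (\<alpha> - r)"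
    using H by (simp add: integral_unique mult.assoc)
qed

lemma lim_le:
  fixes k E X :: real
  assumes H: "\<And>k'. 0 < k' \<Longrightarrow> k' < k \<Longrightarrow> k' * E \<le> X" and k: "k > 0" and E: "E > 0"
  shows "k * E \<le> X"
proof (rule ccontr)
  assume "\<not> k * E \<le> X"
  hence X: "X < k * E" by simp
  define m where "m = max X 0 / E"
  define k' where "k' = (m + k) / 2"
  have m: "m < k" using X k E by (simp add: m_def divide_less_eq max_def)
  have "m \<ge> 0" using E by (simp add: m_def)
  hence k'p: "k' > 0" using k by (simp add: k'_def)
  have k'k: "k' < k" using m by (simp add: k'_def)
  have "k' > m" using m by (simp add: k'_def)
  hence "k' > max X 0 / E" by (simp add: m_def)
  hence "k' * E > max X 0" using E by (simp add: divide_less_eq)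
  moreover have "k' * E \<le> X" using H[OF k'p k'k] .
  ultimately show False by simp
qed

lemma D_nonpos_if_not_two:
  fixes f g :: "real \<Rightarrow> real"
  assumes nt: "\<not> (\<exists>u v. u \<in> {t. 0 < t \<and> f t > g t} \<and> v \<in> {t. 0 < t \<and> f t > g t} \<and> u < v)"
    and if': "(\<lambda>t. t powr (r-1) * f t) integrable_on {0<..}"
    and ig: "(\<lambda>t. t powr (r-1) * g t) integrable_on {0<..}"
  shows "integral {0<..} (\<lambda>t. t powr (r-1) * f t) - integral {0<..} (\<lambda>t. t powr (r-1) * g t) \<le> 0"
proof -
  obtain t0 where t0: "\<And>t. 0 < t \<Longrightarrow> t \<noteq> t0 \<Longrightarrow> f t \<le> g t"
  proof (cases "\<exists>u. 0 < u \<and> f u > g u")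
    case True
    then obtain u where u: "0 < u" "f u > g u" by auto
    show ?thesis
    proof (rule that[of u])
      fix t assume t: "0 < t" "t \<noteq> u"
      show "f t \<le> g t"
      proof (rule ccontr)
        assume "\<not> f t \<le> g t"
        hence ft: "f t > g t" by simp
        show False
        proof (cases "t < u")
          case True thus False using nt ft u t by blast
        next
          case False hence "u < t" using t(2) by auto
          thus False using nt ft u t by blast
        qed
      qed
    qed
  next
    case False
    thus ?thesis using that[of 0] by force
  qed
  have "integral {0<..} (\<lambda>t. t powr (r-1) * f t - t powr (r-1) * g t) \<le> 0"
  proof (rule integral_nonpos_but_one[where ?t0.0=t0])
    fix t :: real assume "t \<in> {0<..}" "t \<noteq> t0"
    hence "f t - g t \<le> 0" using t0 by simp
    hence "t powr (r-1) * (f t - g t) \<le> 0" by (simp add: mult_nonneg_nonpos)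
    thus "t powr (r-1) * f t - t powr (r-1) * g t \<le> 0" by (simp add: algebra_simps)
  qed
  thus ?thesis using integral_diff[OF if' ig] by simp
qed



lemma struct_gen_obt:
  fixes S :: "real set" and \<beta> \<gamma> u v :: real
  assumes S: "S \<subseteq> {0<..}" and uv: "u \<in> S" "v \<in> S" "u < v"
    and cvx: "\<And>x y t. x \<in> S \<Longrightarrow> y \<in> S \<Longrightarrow> x \<le> t \<Longrightarrow> t \<le> y \<Longrightarrow> t \<in> S"
    and bg: "\<beta> > 0" "\<gamma> > 0"
  obtains a b where "a \<ge> 0" "b \<ge> 0"
    "\<And>t. t > 0 \<Longrightarrow> t \<in> S \<Longrightarrow> a * t powr (-\<beta>) + b * t powr \<gamma> \<le> 1"
    "\<And>t. t > 0 \<Longrightarrow> t \<notin> S \<Longrightarrow> a * t powr (-\<beta>) + b * t powr \<gamma> \<ge> 1"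
proof -
  have X: "\<exists>a\<ge>0. \<exists>b\<ge>0. \<forall>t>0.
     (t \<in> S \<longrightarrow> a * t powr (-\<beta>) + b * t powr \<gamma> \<le> 1) \<and>
     (t \<notin> S \<longrightarrow> a * t powr (-\<beta>) + b * t powr \<gamma> \<ge> 1)"
    by (rule struct_gen[OF S uv cvx bg])
  obtain a where A: "a \<ge> 0 \<and> (\<exists>b\<ge>0. \<forall>t>0.
     (t \<in> S \<longrightarrow> a * t powr (-\<beta>) + b * t powr \<gamma> \<le> 1) \<and>
     (t \<notin> S \<longrightarrow> a * t powr (-\<beta>) + b * t powr \<gamma> \<ge> 1))" using X ..
  obtain b where B: "b \<ge> 0 \<and> (\<forall>t>0.
     (t \<in> S \<longrightarrow> a * t powr (-\<beta>) + b * t powr \<gamma> \<le> 1) \<and>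
     (t \<notin> S \<longrightarrow> a * t powr (-\<beta>) + b * t powr \<gamma> \<ge> 1))" using conjunct2[OF A] ..
  show ?thesis
  proof (rule that[of a b])
    show "a \<ge> 0" using A by simp
    show "b \<ge> 0" using B by simp
    fix t :: real assume t: "t > 0"
    have P: "(t \<in> S \<longrightarrow> a * t powr (-\<beta>) + b * t powr \<gamma> \<le> 1) \<and>
     (t \<notin> S \<longrightarrow> a * t powr (-\<beta>) + b * t powr \<gamma> \<ge> 1)" using conjunct2[OF B] t by simp
    { assume "t \<in> S" thus "a * t powr (-\<beta>) + b * t powr \<gamma> \<le> 1" using P by simp }
    { assume "t \<notin> S" thus "a * t powr (-\<beta>) + b * t powr \<gamma> \<ge> 1" using P by simp }
  qed
qed

lemma struct_left_obt:
  fixes S :: "real set" and \<gamma> :: real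
  assumes "S \<subseteq> {0<..}" "S \<noteq> {}" "\<And>t x. 0 < t \<Longrightarrow> x \<in> S \<Longrightarrow> t < x \<Longrightarrow> t \<in> S" "\<gamma> > 0"
  obtains b where "b \<ge> 0" "\<And>t. t > 0 \<Longrightarrow> t \<in> S \<Longrightarrow> b * t powr \<gamma> \<le> 1"
    "\<And>t. t > 0 \<Longrightarrow> t \<notin> S \<Longrightarrow> b * t powr \<gamma> \<ge> 1"
proof -
  have X: "\<exists>b\<ge>0. \<forall>t>0. (t \<in> S \<longrightarrow> b * t powr \<gamma> \<le> 1) \<and> (t \<notin> S \<longrightarrow> b * t powr \<gamma> \<ge> 1)"
    by (rule struct_left[OF assms])
  obtain b where B: "b \<ge> 0 \<and> (\<forall>t>0. (t \<in> S \<longrightarrow> b * t powr \<gamma> \<le> 1) \<and> (t \<notin> S \<longrightarrow> b * t powr \<gamma> \<ge> 1))"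
    using X ..
  show ?thesis
  proof (rule that[of b])
    show "b \<ge> 0" using B by simp
    fix t :: real assume t: "t > 0"
    have P: "(t \<in> S \<longrightarrow> b * t powr \<gamma> \<le> 1) \<and> (t \<notin> S \<longrightarrow> b * t powr \<gamma> \<ge> 1)"
      using conjunct2[OF B] t by simp
    { assume "t \<in> S" thus "b * t powr \<gamma> \<le> 1" using P by simp }
    { assume "t \<notin> S" thus "b * t powr \<gamma> \<ge> 1" using P by simp }
  qed
qed

lemma s_powr: "exp (\<sigma>::real) powr r = exp (r * \<sigma>)"
  by (simp add: powr_def)

lemma TS:
  fixes f :: "real \<Rightarrow> real"
  assumes a: "\<alpha> > 0" and NC: "neg_inv_concave_on \<alpha> {0..} f" and fi: "f integrable_on {0..}"
    and q: "0 < q0" "q0 < q1" "q1 < \<alpha>" and l: "0 < l" "l < 1" and qd: "q = (1-l)*q0 + l*q1"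
    and M0: "Mf f q0 > 0" and M1: "Mf f q1 > 0"
  shows "Mf f q / Beta q (\<alpha>-q) \<ge> (Mf f q0 / Beta q0 (\<alpha>-q0)) powr (1-l) * (Mf f q1 / Beta q1 (\<alpha>-q1)) powr l"
proof -
  have e1: "q - q0 = l * (q1 - q0)" by (simp add: qd algebra_simps)
  have e2: "q1 - q = (1 - l) * (q1 - q0)" by (simp add: qd algebra_simps)
  have p1: "0 < l * (q1 - q0)" using l q by simp
  have p2: "0 < (1 - l) * (q1 - q0)" using l q by simp
  have qq1: "q0 < q" using p1 unfolding e1[symmetric] by simp
  have qq2: "q < q1" using p2 unfolding e2[symmetric] by simp
  note qq = qq1 qq2
  have fnn: "\<And>t. t \<ge> 0 \<Longrightarrow> f t \<ge> 0" using f_nonneg[OF NC] .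
  define B0 where "B0 = Beta q0 (\<alpha> - q0)"
  define B where "B = Beta q (\<alpha> - q)"
  define B1 where "B1 = Beta q1 (\<alpha> - q1)"
  have Bp: "B0 > 0" "B > 0" "B1 > 0" unfolding B0_def B_def B1_def using q qq by (auto intro!: Beta_pos)
  define R0 where "R0 = Mf f q0 / B0"
  define R1 where "R1 = Mf f q1 / B1"
  have Rp: "R0 > 0" "R1 > 0" using M0 M1 Bp by (auto simp: R0_def R1_def)
  have i0: "(\<lambda>t. t powr (q0-1) * f t) integrable_on {0<..}"
    using M0 unfolding Mf_def by (intro int_if_nonzero) simp
  have i1: "(\<lambda>t. t powr (q1-1) * f t) integrable_on {0<..}"
    using M1 unfolding Mf_def by (intro int_if_nonzero) simp
  have iq: "(\<lambda>t. t powr (q-1) * f t) integrable_on {0<..}"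
    using int_mid[OF fi fnn i0 i1] qq by simp
  define \<sigma> where "\<sigma> = (ln R1 - ln R0) / (q1 - q0)"
  define s where "s = exp \<sigma>"
  have sp: "s > 0" by (simp add: s_def)
  define \<kappa> where "\<kappa> = R0 / exp (q0 * \<sigma>)"
  have \<kappa>p: "\<kappa> > 0" using Rp by (simp add: \<kappa>_def)
  have \<kappa>0: "\<kappa> * exp (q0 * \<sigma>) = R0" by (simp add: \<kappa>_def)
  have \<kappa>1: "\<kappa> * exp (q1 * \<sigma>) = R1"
  proof -
    have "\<kappa> * exp (q1 * \<sigma>) = R0 * exp ((q1 - q0) * \<sigma>)"
      by (simp add: \<kappa>_def exp_diff left_diff_distrib)
    also have "(q1 - q0) * \<sigma> = ln R1 - ln R0" using q by (simp add: \<sigma>_def)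
    finally show ?thesis using Rp by (simp add: exp_diff)
  qed
  have claim: "k' * exp (q * \<sigma>) \<le> Mf f q / B" if k': "0 < k'" "k' < \<kappa>" for k'
  proof -
    define g where "g = gm \<alpha> (k' powr (-1/\<alpha>)) s"
    have Cp: "k' powr (-1/\<alpha>) > 0" using k' by simp
    have qs: "0 < q0" "q0 < \<alpha>" "0 < q" "q < \<alpha>" "0 < q1" "q1 < \<alpha>" using q qq by auto
    have ig: "(\<lambda>t. t powr (r-1) * g t) integrable_on {0<..}" if "r \<in> {q0, q, q1}" for r
      unfolding g_def using M_gm(1)[OF a _ _ k'(1) sp, of r] that qs by auto
    have vg: "integral {0<..} (\<lambda>t. t powr (r-1) * g t) = k' * exp (r * \<sigma>) * Beta r (\<alpha> - r)"
      if "r \<in> {q0, q, q1}" for r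
      unfolding g_def using M_gm(2)[OF a _ _ k'(1) sp, of r] that qs by (auto simp: s_def s_powr)
    have if': "(\<lambda>t. t powr (r-1) * f t) integrable_on {0<..}" if "r \<in> {q0, q, q1}" for r
      using that i0 iq i1 by auto
    define D where "D = (\<lambda>r. integral {0<..} (\<lambda>t. t powr (r-1) * f t) - integral {0<..} (\<lambda>t. t powr (r-1) * g t))"
    have D0: "D q0 > 0"
    proof -
      have "k' * exp (q0 * \<sigma>) < \<kappa> * exp (q0 * \<sigma>)" using k' by simp
      hence "k' * exp (q0 * \<sigma>) * B0 < R0 * B0" using \<kappa>0 Bp by simp
      thus ?thesis using vg[of q0] Bp unfolding D_def R0_def Mf_def B0_def by simp
    qed
    have D1: "D q1 > 0"
    proof -
      have "k' * exp (q1 * \<sigma>) < \<kappa> * exp (q1 * \<sigma>)" using k' by simp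
      hence "k' * exp (q1 * \<sigma>) * B1 < R1 * B1" using \<kappa>1 Bp by simp
      thus ?thesis using vg[of q1] Bp unfolding D_def R1_def Mf_def B1_def by simp
    qed
    define S where "S = {t. 0 < t \<and> f t > g t}"
    have two: "\<exists>u v. u \<in> S \<and> v \<in> S \<and> u < v"
    proof (rule ccontr)
      assume "\<not> ?thesis"
      hence "D q0 \<le> 0" unfolding D_def S_def
        by (intro D_nonpos_if_not_two if' ig) auto
      thus False using D0 by simp
    qed
    then obtain u v where uv: "u \<in> S" "v \<in> S" "u < v" by blast
    have Ssub: "S \<subseteq> {0<..}" by (auto simp: S_def)
    have cvx: "t \<in> S" if "x \<in> S" "y \<in> S" "x \<le> t" "t \<le> y" for x y t
      using that S_convex[OF a NC Cp sp, of x y t] unfolding S_def g_def by auto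
    have bg: "q - q0 > 0" "q1 - q > 0" using qq by auto
    obtain a b where ab: "a \<ge> 0" "b \<ge> 0"
      and inS: "\<And>t. t > 0 \<Longrightarrow> t \<in> S \<Longrightarrow> a * t powr (-(q - q0)) + b * t powr (q1 - q) \<le> 1"
      and outS: "\<And>t. t > 0 \<Longrightarrow> t \<notin> S \<Longrightarrow> a * t powr (-(q - q0)) + b * t powr (q1 - q) \<ge> 1"
      by (rule struct_gen_obt[OF Ssub uv cvx bg]) auto
    have pw: "(1 - (a * t powr (q0 - q) + b * t powr (q1 - q))) * (f t - g t) \<ge> 0" if t: "t > 0" for t
    proof (cases "t \<in> S")
      case True
      hence "f t - g t > 0" by (simp add: S_def)
      moreover have "1 - (a * t powr (q0 - q) + b * t powr (q1 - q)) \<ge> 0" using inS[OF t True] by simp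
      ultimately show ?thesis by simp
    next
      case False
      hence "f t - g t \<le> 0" using t by (simp add: S_def)
      moreover have "1 - (a * t powr (q0 - q) + b * t powr (q1 - q)) \<le> 0" using outS[OF t False] by simp
      ultimately show ?thesis by (simp add: mult_nonpos_nonpos)
    qed
    have "D q \<ge> a * D q0 + b * D q1"
      unfolding D_def by (rule kint[OF if' ig pw]) auto
    moreover have "a * D q0 + b * D q1 \<ge> 0" using ab D0 D1 by simp
    ultimately have "D q \<ge> 0" by simp
    hence "k' * exp (q * \<sigma>) * B \<le> Mf f q" using vg[of q] unfolding D_def Mf_def B_def by simp
    thus ?thesis using Bp by (simp add: pos_le_divide_eq)
  qed
  have "\<kappa> * exp (q * \<sigma>) \<le> Mf f q / B" by (rule lim_le[OF claim \<kappa>p]) auto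
  moreover have "\<kappa> * exp (q * \<sigma>) = R0 powr (1-l) * R1 powr l"
  proof -
    have "\<kappa> * exp (q * \<sigma>) = R0 * exp ((q - q0) * \<sigma>)"
      by (simp add: \<kappa>_def exp_diff left_diff_distrib)
    also have "(q - q0) * \<sigma> = l * (ln R1 - ln R0)" using q by (simp add: \<sigma>_def e1)
    also have "R0 * exp (l * (ln R1 - ln R0)) = exp ((1-l) * ln R0 + l * ln R1)"
    proof -
      have "(1-l) * ln R0 + l * ln R1 = ln R0 + l * (ln R1 - ln R0)" by (simp add: algebra_simps)
      hence "exp ((1-l) * ln R0 + l * ln R1) = exp (ln R0) * exp (l * (ln R1 - ln R0))"
        by (simp only: exp_add)
      thus ?thesis using Rp by simp
    qed
    also have "\<dots> = R0 powr (1-l) * R1 powr l" using Rp by (simp add: powr_def exp_add)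
    finally show ?thesis .
  qed
  ultimately show ?thesis unfolding R0_def R1_def B0_def B1_def B_def by simp
qed



lemma AN:
  fixes f :: "real \<Rightarrow> real"
  assumes a: "\<alpha> > 0" and NC: "neg_inv_concave_on \<alpha> {0..} f" and fi: "f integrable_on {0..}"
    and q: "0 < q1" "q1 < \<alpha>" and l: "0 < l" "l < 1" and qd: "q = l * q1"
    and f0: "f 0 > 0" and M1: "Mf f q1 > 0"
  shows "Mf f q / Beta q (\<alpha>-q) \<ge> f 0 powr (1-l) * (Mf f q1 / Beta q1 (\<alpha>-q1)) powr l"
proof -
  have qq1: "0 < q" using l q by (simp add: qd)
  have "q1 - q = (1 - l) * q1" by (simp add: qd algebra_simps)
  moreover have "0 < (1 - l) * q1" using l q by simp
  ultimately have qq2: "q < q1" by simp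
  have fnn: "\<And>t. t \<ge> 0 \<Longrightarrow> f t \<ge> 0" using f_nonneg[OF NC] .
  define c where "c = f 0"
  have cp: "c > 0" using f0 by (simp add: c_def)
  define B where "B = Beta q (\<alpha> - q)"
  define B1 where "B1 = Beta q1 (\<alpha> - q1)"
  have Bp: "B > 0" "B1 > 0" unfolding B_def B1_def using q qq1 qq2 by (auto intro!: Beta_pos)
  define R1 where "R1 = Mf f q1 / B1"
  have R1p: "R1 > 0" using M1 Bp by (simp add: R1_def)
  have i1: "(\<lambda>t. t powr (q1-1) * f t) integrable_on {0<..}"
    using M1 unfolding Mf_def by (intro int_if_nonzero) simp
  obtain y where y: "y > 0" "f y > 0"
  proof (rule ccontr)
    assume "\<not> thesis"
    hence "\<And>y. y > 0 \<Longrightarrow> f y \<le> 0" using that by force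
    hence "Mf f q1 \<le> 0" unfolding Mf_def
      by (intro integral_nonpos') (simp add: mult_nonneg_nonpos)
    thus False using M1 by simp
  qed
  have iq: "(\<lambda>t. t powr (q-1) * f t) integrable_on {0<..}"
    by (rule int_anch[OF a NC fi i1 qq1 qq2 q(2) y])
  define \<sigma> where "\<sigma> = (ln R1 - ln c) / q1"
  have claim: "k' * c \<le> Mf f q / B" if k': "0 < k'" "k' < exp (q * \<sigma>)" for k'
  proof -
    define \<sigma>' where "\<sigma>' = ln k' / q"
    have ek: "exp (q * \<sigma>') = k'" using k' qq1 by (simp add: \<sigma>'_def)
    have "ln k' < q * \<sigma>" using k' by (metis exp_less_cancel_iff exp_ln)
    hence ss: "\<sigma>' < \<sigma>" using qq1 by (simp add: \<sigma>'_def divide_less_eq mult.commute)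
    define s where "s = exp \<sigma>'"
    have sp: "s > 0" by (simp add: s_def)
    define C where "C = c powr (-1/\<alpha>)"
    have Cp: "C > 0" using cp by (simp add: C_def)
    define g where "g = gm \<alpha> C s"
    have g0: "g 0 = c" using a cp by (simp add: g_def gm_def C_def powr_powr)
    have qs: "0 < q" "q < \<alpha>" "0 < q1" "q1 < \<alpha>" using q qq1 qq2 by auto
    have ig: "(\<lambda>t. t powr (r-1) * g t) integrable_on {0<..}" if "r \<in> {q, q, q1}" for r
      unfolding g_def C_def using M_gm(1)[OF a _ _ cp sp, of r] that qs by auto
    have vg: "integral {0<..} (\<lambda>t. t powr (r-1) * g t) = c * exp (r * \<sigma>') * Beta r (\<alpha> - r)"
      if "r \<in> {q, q, q1}" for r
      unfolding g_def C_def using M_gm(2)[OF a _ _ cp sp, of r] that qs by (auto simp: s_def s_powr)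
    have if': "(\<lambda>t. t powr (r-1) * f t) integrable_on {0<..}" if "r \<in> {q, q, q1}" for r
      using that iq i1 by auto
    define D where "D = (\<lambda>r. integral {0<..} (\<lambda>t. t powr (r-1) * f t) - integral {0<..} (\<lambda>t. t powr (r-1) * g t))"
    have cR: "c * exp (q1 * \<sigma>) = R1"
    proof -
      have "q1 * \<sigma> = ln R1 - ln c" using q by (simp add: \<sigma>_def)
      thus ?thesis using cp R1p by (simp add: exp_diff)
    qed
    have D1: "D q1 > 0"
    proof -
      have "exp (q1 * \<sigma>') < exp (q1 * \<sigma>)" using ss q by simp
      hence "c * exp (q1 * \<sigma>') < c * exp (q1 * \<sigma>)" using cp by simp
      hence "c * exp (q1 * \<sigma>') * B1 < R1 * B1" using cR Bp by simp
      thus ?thesis using vg[of q1] Bp unfolding D_def R1_def Mf_def B1_def by simp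
    qed
    define S where "S = {t. 0 < t \<and> f t > g t}"
    have Sne: "S \<noteq> {}"
    proof
      assume "S = {}"
      hence "D q1 \<le> 0" unfolding D_def S_def
        by (intro D_nonpos_if_not_two if' ig) auto
      thus False using D1 by simp
    qed
    have Ssub: "S \<subseteq> {0<..}" by (auto simp: S_def)
    have down: "t \<in> S" if "0 < t" "x \<in> S" "t < x" for t x
      using that S_down[OF a NC Cp sp, of x t] g0 unfolding S_def g_def c_def by auto
    have bg: "q1 - q > 0" using qq2 by simp
    obtain b where b: "b \<ge> 0"
      and inS: "\<And>t. t > 0 \<Longrightarrow> t \<in> S \<Longrightarrow> b * t powr (q1 - q) \<le> 1"
      and outS: "\<And>t. t > 0 \<Longrightarrow> t \<notin> S \<Longrightarrow> b * t powr (q1 - q) \<ge> 1"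
      by (rule struct_left_obt[OF Ssub Sne down bg]) auto
    have pw: "(1 - (0 * t powr (q - q) + b * t powr (q1 - q))) * (f t - g t) \<ge> 0" if t: "t > 0" for t
    proof (cases "t \<in> S")
      case True
      hence "f t - g t > 0" by (simp add: S_def)
      moreover have "1 - (0 * t powr (q - q) + b * t powr (q1 - q)) \<ge> 0" using inS[OF t True] by simp
      ultimately show ?thesis by simp
    next
      case False
      hence "f t - g t \<le> 0" using t by (simp add: S_def)
      moreover have "1 - (0 * t powr (q - q) + b * t powr (q1 - q)) \<le> 0" using outS[OF t False] by simp
      ultimately show ?thesis by (simp add: mult_nonpos_nonpos)
    qed
    have "D q \<ge> 0 * D q + b * D q1"
      unfolding D_def by (rule kint[OF if' ig pw]) auto
    moreover have "b * D q1 \<ge> 0" using b D1 by simp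
    ultimately have "D q \<ge> 0" by simp
    hence "c * exp (q * \<sigma>') * B \<le> Mf f q" using vg[of q] unfolding D_def Mf_def B_def by simp
    thus ?thesis using Bp ek by (simp add: pos_le_divide_eq mult.commute)
  qed
  have "exp (q * \<sigma>) * c \<le> Mf f q / B" by (rule lim_le[OF claim _ cp]) auto
  moreover have "exp (q * \<sigma>) * c = c powr (1-l) * R1 powr l"
  proof -
    have "q * \<sigma> = l * (ln R1 - ln c)" using q by (simp add: \<sigma>_def qd)
    hence "exp (q * \<sigma>) * c = c * exp (l * (ln R1 - ln c))" by simp
    also have "c * exp (l * (ln R1 - ln c)) = exp ((1-l) * ln c + l * ln R1)"
    proof -
      have "(1-l) * ln c + l * ln R1 = ln c + l * (ln R1 - ln c)" by (simp add: algebra_simps)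
      hence "exp ((1-l) * ln c + l * ln R1) = exp (ln c) * exp (l * (ln R1 - ln c))"
        by (simp only: exp_add)
      thus ?thesis using cp by simp
    qed
    also have "\<dots> = c powr (1-l) * R1 powr l" using cp R1p by (simp add: powr_def exp_add)
    finally show ?thesis .
  qed
  ultimately show ?thesis unfolding R1_def B1_def B_def c_def by simp
qed



lemma main_ord:
  fixes f :: "real \<Rightarrow> real"
  assumes a: "\<alpha> > 0" and NC: "neg_inv_concave_on \<alpha> {0..} f" and fi: "f integrable_on {0..}"
    and xy: "0 \<le> x" "x < y" "y < \<alpha>" and l: "0 < l" "l < 1"
    and Hnn: "\<And>p. p \<in> {0..<\<alpha>} \<Longrightarrow> H_fun \<alpha> f p \<ge> 0"
  shows "H_fun \<alpha> f ((1 - l) * x + l * y) \<ge> H_fun \<alpha> f x powr (1 - l) * H_fun \<alpha> f y powr l"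
proof -
  define z where "z = (1 - l) * x + l * y"
  have "z - x = l * (y - x)" by (simp add: z_def algebra_simps)
  moreover have "0 < l * (y - x)" using l xy by simp
  ultimately have xz: "x < z" by simp
  have "y - z = (1 - l) * (y - x)" by (simp add: z_def algebra_simps)
  moreover have "0 < (1 - l) * (y - x)" using l xy by simp
  ultimately have zy: "z < y" by simp
  have zp: "z > 0" using xz xy by simp
  have HM: "H_fun \<alpha> f p = Mf f p / Beta p (\<alpha> - p)" if "p \<noteq> 0" for p
    using that by (simp add: H_fun_def Mf_def)
  have Hz0: "H_fun \<alpha> f z \<ge> 0" using Hnn zp zy xy by simp
  show ?thesis
  proof (cases "H_fun \<alpha> f x = 0 \<or> H_fun \<alpha> f y = 0")
    case True
    hence "H_fun \<alpha> f x powr (1 - l) * H_fun \<alpha> f y powr l = 0" by auto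
    moreover have "0 \<le> H_fun \<alpha> f ((1 - l) * x + l * y)" using Hz0 by (simp add: z_def)
    ultimately show ?thesis by linarith
  next
    case False
    have Hxp: "H_fun \<alpha> f x > 0" using False Hnn[of x] xy by force
    have Hyp: "H_fun \<alpha> f y > 0" using False Hnn[of y] xy by force
    have yp: "y > 0" using xy by simp
    have By: "Beta y (\<alpha> - y) > 0" using yp xy by (intro Beta_pos) auto
    have My: "Mf f y > 0" using Hyp HM[of y] yp By by (simp add: zero_less_divide_iff)
    show ?thesis
    proof (cases "x = 0")
      case True
      have f0: "f 0 > 0" using Hxp True by (simp add: H_fun_def)
      have zl: "z = l * y" using True by (simp add: z_def)
      have R: "f 0 powr (1-l) * (Mf f y / Beta y (\<alpha> - y)) powr l \<le> Mf f z / Beta z (\<alpha> - z)"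
        by (rule AN[OF a NC fi yp xy(3) l zl f0 My])
      have e1: "H_fun \<alpha> f ((1-l)*x + l*y) = Mf f z / Beta z (\<alpha> - z)"
        using HM[of z] zp by (simp add: z_def)
      have e2: "H_fun \<alpha> f x = f 0" using True by (simp add: H_fun_def)
      have e3: "H_fun \<alpha> f y = Mf f y / Beta y (\<alpha> - y)" using HM[of y] yp by simp
      show ?thesis unfolding e1 e2 e3 by (rule R)
    next
      case False
      hence xp: "x > 0" using xy by simp
      have Bx: "Beta x (\<alpha> - x) > 0" using xp xy by (intro Beta_pos) auto
      have Mx: "Mf f x > 0" using Hxp HM[of x] xp Bx by (simp add: zero_less_divide_iff)
      have R: "(Mf f x / Beta x (\<alpha> - x)) powr (1-l) * (Mf f y / Beta y (\<alpha> - y)) powr l \<le> Mf f z / Beta z (\<alpha> - z)"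
        by (rule TS[OF a NC fi xp xy(2) xy(3) l z_def Mx My])
      have e1: "H_fun \<alpha> f ((1-l)*x + l*y) = Mf f z / Beta z (\<alpha> - z)"
        using HM[of z] zp by (simp add: z_def)
      have e2: "H_fun \<alpha> f x = Mf f x / Beta x (\<alpha> - x)" using HM[of x] xp by simp
      have e3: "H_fun \<alpha> f y = Mf f y / Beta y (\<alpha> - y)" using HM[of y] yp by simp
      show ?thesis unfolding e1 e2 e3 by (rule R)
    qed
  qed
qed

theorem theorem2:
  fixes \<alpha> :: real and f :: "real \<Rightarrow> real"
  assumes "\<alpha> > 0"
    and "neg_inv_concave_on \<alpha> {0..} f"
    and "f integrable_on {0..}"
  shows "log_concave_on {0..<\<alpha>} (H_fun \<alpha> f)"
proof -
  note a = assms(1) and NC = assms(2) and fi = assms(3)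
  have fnn: "\<And>t. t \<ge> 0 \<Longrightarrow> f t \<ge> 0" using f_nonneg[OF NC] .
  have Hnn: "H_fun \<alpha> f p \<ge> 0" if p: "p \<in> {0..<\<alpha>}" for p
  proof (cases "p = 0")
    case True thus ?thesis using fnn by (simp add: H_fun_def)
  next
    case False
    hence pp: "p > 0" using p by simp
    have "Beta p (\<alpha> - p) > 0" using pp p by (intro Beta_pos) auto
    moreover have "integral {0<..} (\<lambda>t. t powr (p - 1) * f t) \<ge> 0"
    proof (rule integral_nonneg')
      fix t :: real assume "t \<in> {0<..}"
      hence "f t \<ge> 0" using fnn by simp
      thus "0 \<le> t powr (p - 1) * f t" by simp
    qed
    ultimately show ?thesis using False by (simp add: H_fun_def)
  qed
  show ?thesis unfolding log_concave_on_def
  proof (intro conjI ballI)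
    show "\<And>x. x \<in> {0..<\<alpha>} \<Longrightarrow> 0 \<le> H_fun \<alpha> f x" using Hnn by blast
    fix x y l :: real assume x: "x \<in> {0..<\<alpha>}" and y: "y \<in> {0..<\<alpha>}" and l: "l \<in> {0<..<1}"
    consider "x = y" | "x < y" | "y < x" by linarith
    thus "H_fun \<alpha> f x powr (1 - l) * H_fun \<alpha> f y powr l \<le> H_fun \<alpha> f ((1 - l) * x + l * y)"
    proof cases
      case 1
      have e: "(1 - l) * x + l * y = x" using 1 by (simp add: algebra_simps)
      have "H_fun \<alpha> f x powr (1 - l) * H_fun \<alpha> f x powr l = H_fun \<alpha> f x"
      proof (cases "H_fun \<alpha> f x = 0")
        case True thus ?thesis by simp
      next
        case False
        hence "H_fun \<alpha> f x > 0" using Hnn[OF x] by simp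
        thus ?thesis by (simp add: powr_add[symmetric])
      qed
      thus ?thesis using 1 e by simp
    next
      case 2
      thus ?thesis using main_ord[OF a NC fi _ 2 _ _ _ Hnn] x y l by auto
    next
      case 3
      have "H_fun \<alpha> f ((1 - (1 - l)) * y + (1 - l) * x) \<ge> H_fun \<alpha> f y powr (1 - (1 - l)) * H_fun \<alpha> f x powr (1 - l)"
        using main_ord[OF a NC fi _ 3 _ _ _ Hnn, where l = "1 - l"] x y l by auto
      hence A: "H_fun \<alpha> f ((1 - (1 - l)) * y + (1 - l) * x) \<ge> H_fun \<alpha> f y powr (1 - (1 - l)) * H_fun \<alpha> f x powr (1 - l)" .
      have eq1: "(1 - (1 - l)) * y + (1 - l) * x = (1 - l) * x + l * y" by simp
      have eq2: "(1 - (1 - l)) = l" by simp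
      show ?thesis using A[unfolded eq1, unfolded eq2] by (metis mult.commute)
    qed
  qed
qed


end
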